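(* Let $T$ be a table and $C_T$ the event-log of Algorithm 2 run on $T$. If a partial witness tree $\tau_S$ occurs in $C_T$, then (1) $\tau_S$ is proper, and (2) $\tau_S$ passes the $T$-check.
   Context: Setting: $\mathcal{P}$ is a finite set of mutually independent discrete random variables with finite domains; $\mathcal{A}$ is a finite set of events determined by them; $\mathrm{vbl}(A)$ is the minimal set of variables determining $A$; the dependency graph joins $A\neq B$ iff $\mathrm{vbl}(A)\cap\mathrm{vbl}(B)\neq\emptyset$; $\Gamma(A)$ is the neighborhood and $\Gamma^+(A)=\Gamma(A)\cup\{A\}$. Binary trees: for each $A\in\mathcal{A}$ a rooted binary tree $\mathbb{B}_A$ is fixed whose vertices are labeled by nonempty subsets of $\mathrm{vbl}(A)$: the root is labeled $\mathrm{vbl}(A)$, leaves are labeled by singletons, and each non-leaf vertex has two children whose labels are disjoint and whose union is its label. $\mathbb{B}_A$ also denotes the set of these labels. Partial witness tree $\tau_S$: a finite rooted tree whose root is labeled by some $S\in\mathbb{B}_A$ for some $A\in\mathcal{A}$, and whose other vertices are labeled by events; each child of the root is labeled by an event $B$ with $\mathrm{vbl}(B)\cap S\ne\emptyset$, and each child of a non-root vertex labeled $B$ is labeled by an element of $\Gamma^+(B)$. The label of a non-root vertex $v$ is written $[v]$. It is proper if the children of every vertex have pairwise distinct labels. Table: $T$ assigns to each variable $p$ a sequence of values $T(p,1),T(p,2),\dots$ in its domain. Algorithm 2 on $T$: set a pointer $t_p=1$ for each $p$; while some event happens under the evaluation $p=T(p,t_p)$ for all $p$, pick one such event $A$ by a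 fixed deterministic rule and increment $t_p$ for every $p\in\mathrm{vbl}(A)$. The event-log $C_T$ is the sequence $C_T(1),C_T(2),\dots$ of events picked in successive iterations. For an event-log $C$, a step $t$ and $S\in\mathbb{B}_{C(t)}$, the tree $\tau_C(t,S)$ is built as follows: start with a single root labeled $S$; for $i=t-1,t-2,\dots,1$: (i) if some non-root vertex $v$ satisfies $C(i)\in\Gamma^+([v])$, choose such a $v$ of maximum distance from the root (ties broken arbitrarily) and attach to it a new child labeled $C(i)$; (ii) otherwise, if $S\cap\mathrm{vbl}(C(i))\ne\emptyset$, attach a new child labeled $C(i)$ to the root; (iii) otherwise do nothing. A partial witness tree $\tau_S$ occurs in $C$ if there is $t$ with $S\in\mathbb{B}_{C(t)}$ and $\tau_S=\tau_C(t,S)$. $T$-check of $\tau_S$: visit the non-root vertices in order of decreasing depth; at a vertex labeled $B$, for each $p\in\mathrm{vbl}(B)$ take the first not-yet-used value of row $p$ of $T$ (row $p$ is consumed in order $T(p,1),T(p,2),\dots$) and check whether $B$ happens under these values. The $T$-check passes if every visited event happens. *)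

theory Defs
  imports Main "HOL-Library.Multiset"
begin

text \<open>An event e is given by its variable set vbl e and the predicate
  hap e f ("e happens under the evaluation f").\<close>

definition determines ::
  "'v set \<Rightarrow> ('v \<Rightarrow> 'val set) \<Rightarrow> ('e \<Rightarrow> ('v \<Rightarrow> 'val) \<Rightarrow> bool) \<Rightarrow> 'e \<Rightarrow> 'v set \<Rightarrow> bool"
  where "determines P D hap A V \<longleftrightarrow>
     (\<forall>f g. (\<forall>p\<in>P. f p \<in> D p) \<longrightarrow> (\<forall>p\<in>P. g p \<in> D p) \<longrightarrow>
        (\<forall>p\<in>V. f p = g p) \<longrightarrow> (hap A f \<longleftrightarrow> hap A g))"

definition setting ::
  "'v set \<Rightarrow> 'e set \<Rightarrow> ('v \<Rightarrow> 'val set) \<Rightarrow> ('e \<Rightarrow> 'v set) \<Rightarrow> ('e \<Rightarrow> ('v \<Rightarrow> 'val) \<Rightarrow> bool) \<Rightarrow> bool"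
  where "setting P Ev D vbl hap \<longleftrightarrow>
     finite P \<and> finite Ev \<and> (\<forall>p\<in>P. finite (D p) \<and> D p \<noteq> {}) \<and>
     (\<forall>A\<in>Ev. vbl A \<subseteq> P \<and> determines P D hap A (vbl A) \<and>
        (\<forall>V. V \<subset> vbl A \<longrightarrow> \<not> determines P D hap A V))"

definition Gamma :: "'e set \<Rightarrow> ('e \<Rightarrow> 'v set) \<Rightarrow> 'e \<Rightarrow> 'e set"
  where "Gamma Ev vbl A = {B \<in> Ev. B \<noteq> A \<and> vbl A \<inter> vbl B \<noteq> {}}"

definition Gamma_plus :: "'e set \<Rightarrow> ('e \<Rightarrow> 'v set) \<Rightarrow> 'e \<Rightarrow> 'e set"
  where "Gamma_plus Ev vbl A = insert A (Gamma Ev vbl A)"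

datatype 'v btree = BLeaf "'v set" | BNode "'v set" "'v btree" "'v btree"

fun blabel :: "'v btree \<Rightarrow> 'v set" where
  "blabel (BLeaf S) = S"
| "blabel (BNode S _ _) = S"

fun blabels :: "'v btree \<Rightarrow> 'v set set" where
  "blabels (BLeaf S) = {S}"
| "blabels (BNode S l r) = insert S (blabels l \<union> blabels r)"

fun bwf :: "'v btree \<Rightarrow> bool" where
  "bwf (BLeaf S) \<longleftrightarrow> (\<exists>p. S = {p})"
| "bwf (BNode S l r) \<longleftrightarrow> bwf l \<and> bwf r \<and> blabel l \<noteq> {} \<and> blabel r \<noteq> {} \<and>
      blabel l \<inter> blabel r = {} \<and> blabel l \<union> blabel r = S"

definition valid_btrees :: "'e set \<Rightarrow> ('e \<Rightarrow> 'v set) \<Rightarrow> ('e \<Rightarrow> 'v btree) \<Rightarrow> bool"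
  where "valid_btrees Ev vbl BT \<longleftrightarrow> (\<forall>A\<in>Ev. bwf (BT A) \<and> blabel (BT A) = vbl A)"

text \<open>Non-root vertices: an event label and a multiset of children (unordered
  rooted trees, i.e. trees up to isomorphism). A partial witness tree is a pair
  (S, children of the root).\<close>

datatype 'e wt = WT (wlab: 'e) (wchildren: "'e wt multiset")

type_synonym ('v, 'e) pwt = "'v set \<times> 'e wt multiset"

primrec verts :: "'e wt \<Rightarrow> (nat \<times> 'e) multiset" where
  "verts (WT A ch) = add_mset (0, A)
      (sum_mset (image_mset (\<lambda>m. image_mset (\<lambda>(d, B). (Suc d, B)) m) (image_mset verts ch)))"

text \<open>(depth, label) for all non-root vertices of a partial witness tree (children of the root have depth 1).\<close>
definition pwt_verts :: "('v, 'e) pwt \<Rightarrow> (nat \<times> 'e) multiset" where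
  "pwt_verts \<tau> = image_mset (\<lambda>(d, B). (Suc d, B)) (sum_mset (image_mset verts (snd \<tau>)))"

primrec wt_ok :: "('e \<Rightarrow> 'e set) \<Rightarrow> 'e wt \<Rightarrow> bool" where
  "wt_ok G (WT A ch) \<longleftrightarrow> (\<forall>c\<in>#ch. wlab c \<in> G A) \<and> (\<forall>b\<in>#image_mset (wt_ok G) ch. b)"

definition is_pwt ::
  "'e set \<Rightarrow> ('e \<Rightarrow> 'v set) \<Rightarrow> ('e \<Rightarrow> 'v btree) \<Rightarrow> ('v, 'e) pwt \<Rightarrow> bool"
  where "is_pwt Ev vbl BT \<tau> \<longleftrightarrow>
     (\<exists>A\<in>Ev. fst \<tau> \<in> blabels (BT A)) \<and>
     (\<forall>c\<in>#snd \<tau>. wlab c \<in> Ev \<and> vbl (wlab c) \<inter> fst \<tau> \<noteq> {}) \<and>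
     (\<forall>c\<in>#snd \<tau>. wt_ok (Gamma_plus Ev vbl) c)"

definition distinct_labels :: "'e wt multiset \<Rightarrow> bool" where
  "distinct_labels ch \<longleftrightarrow> (\<forall>B. count (image_mset wlab ch) B \<le> 1)"

primrec wt_proper :: "'e wt \<Rightarrow> bool" where
  "wt_proper (WT A ch) \<longleftrightarrow> distinct_labels ch \<and> (\<forall>b\<in>#image_mset wt_proper ch. b)"

definition proper :: "('v, 'e) pwt \<Rightarrow> bool" where
  "proper \<tau> \<longleftrightarrow> distinct_labels (snd \<tau>) \<and> (\<forall>c\<in>#snd \<tau>. wt_proper c)"

text \<open>Table: T p i is the i-th entry (i \<ge> 1) of row p.\<close>
definition valid_table :: "'v set \<Rightarrow> ('v \<Rightarrow> 'val set) \<Rightarrow> ('v \<Rightarrow> nat \<Rightarrow> 'val) \<Rightarrow> bool"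
  where "valid_table P D T \<longleftrightarrow> (\<forall>p\<in>P. \<forall>i\<ge>1. T p i \<in> D p)"

text \<open>Current evaluation after the events hs have been picked: pointer
  t_p = 1 + number of picked events containing p.\<close>
definition cur_eval :: "('e \<Rightarrow> 'v set) \<Rightarrow> ('v \<Rightarrow> nat \<Rightarrow> 'val) \<Rightarrow> 'e list \<Rightarrow> 'v \<Rightarrow> 'val"
  where "cur_eval vbl T hs = (\<lambda>p. T p (Suc (length (filter (\<lambda>B. p \<in> vbl B) hs))))"

definition valid_rule ::
  "'e set \<Rightarrow> ('e \<Rightarrow> ('v \<Rightarrow> 'val) \<Rightarrow> bool) \<Rightarrow> ('e list \<Rightarrow> ('v \<Rightarrow> 'val) \<Rightarrow> 'e) \<Rightarrow> bool"
  where "valid_rule Ev hap rule \<longleftrightarrow>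
     (\<forall>hs f. (\<exists>A\<in>Ev. hap A f) \<longrightarrow> rule hs f \<in> Ev \<and> hap (rule hs f) f)"

text \<open>run k = the events picked in the first k iterations (shorter if the algorithm stopped).\<close>
primrec run ::
  "'e set \<Rightarrow> ('e \<Rightarrow> 'v set) \<Rightarrow> ('e \<Rightarrow> ('v \<Rightarrow> 'val) \<Rightarrow> bool) \<Rightarrow> ('e list \<Rightarrow> ('v \<Rightarrow> 'val) \<Rightarrow> 'e)
    \<Rightarrow> ('v \<Rightarrow> nat \<Rightarrow> 'val) \<Rightarrow> nat \<Rightarrow> 'e list" where
  "run Ev vbl hap rule T 0 = []"
| "run Ev vbl hap rule T (Suc k) =
     (let hs = run Ev vbl hap rule T k; f = cur_eval vbl T hs in
      if \<exists>A\<in>Ev. hap A f then hs @ [rule hs f] else hs)"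

text \<open>Step t (t \<ge> 1) exists iff the algorithm performed at least t iterations; then
  C_T(t) is the last element of run t and C_T(1..t-1) = butlast (run t).\<close>
definition is_step where
  "is_step Ev vbl hap rule T t \<longleftrightarrow> 1 \<le> t \<and> length (run Ev vbl hap rule T t) = t"

text \<open>att P B k v v': v' arises from v by attaching a new leaf labelled B to a vertex
  at relative depth k whose label satisfies P.\<close>
inductive att :: "('e \<Rightarrow> bool) \<Rightarrow> 'e \<Rightarrow> nat \<Rightarrow> 'e wt \<Rightarrow> 'e wt \<Rightarrow> bool" for P B where
  here: "P A \<Longrightarrow> att P B 0 (WT A ch) (WT A (add_mset (WT B {#}) ch))"
| down: "c \<in># ch \<Longrightarrow> att P B k c c' \<Longrightarrow>
           att P B (Suc k) (WT A ch) (WT A (add_mset c' (ch - {#c#})))"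

text \<open>One step of the construction, processing event B = C(i) (ties broken arbitrarily,
  hence a relation).\<close>
definition build_step :: "'e set \<Rightarrow> ('e \<Rightarrow> 'v set) \<Rightarrow> 'e \<Rightarrow> ('v, 'e) pwt \<Rightarrow> ('v, 'e) pwt \<Rightarrow> bool"
  where "build_step Ev vbl B \<tau> \<tau>' \<longleftrightarrow>
    (let P = (\<lambda>L. B \<in> Gamma_plus Ev vbl L);
         Ds = {d. \<exists>c\<in>#snd \<tau>. \<exists>L. (d, L) \<in># verts c \<and> P L} in
     if Ds \<noteq> {} then
       fst \<tau>' = fst \<tau> \<and>
       (\<exists>c\<in>#snd \<tau>. \<exists>c'. att P B (Max Ds) c c' \<and> snd \<tau>' = add_mset c' (snd \<tau> - {#c#}))
     else if fst \<tau> \<inter> vbl B \<noteq> {} then \<tau>' = (fst \<tau>, add_mset (WT B {#}) (snd \<tau>))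
     else \<tau>' = \<tau>)"

inductive build_steps :: "'e set \<Rightarrow> ('e \<Rightarrow> 'v set) \<Rightarrow> ('v, 'e) pwt \<Rightarrow> 'e list \<Rightarrow> ('v, 'e) pwt \<Rightarrow> bool"
  for Ev vbl where
  nil: "build_steps Ev vbl \<tau> [] \<tau>"
| cons: "build_step Ev vbl B \<tau> \<tau>1 \<Longrightarrow> build_steps Ev vbl \<tau>1 bs \<tau>2 \<Longrightarrow> build_steps Ev vbl \<tau> (B # bs) \<tau>2"

text \<open>tau occurs in C_T: for some step t, S = root label of tau lies in B_{C(t)} and tau is
  a possible outcome of the construction of tau_C(t,S), processing C(t-1), ..., C(1).\<close>
definition occurs where
  "occurs Ev vbl hap rule T BT \<tau> \<longleftrightarrow>
     (\<exists>t. is_step Ev vbl hap rule T t \<and>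
        fst \<tau> \<in> blabels (BT (last (run Ev vbl hap rule T t))) \<and>
        build_steps Ev vbl (fst \<tau>, {#}) (rev (butlast (run Ev vbl hap rule T t))) \<tau>)"

primrec chk :: "('e \<Rightarrow> 'v set) \<Rightarrow> ('e \<Rightarrow> ('v \<Rightarrow> 'val) \<Rightarrow> bool) \<Rightarrow> ('v \<Rightarrow> nat \<Rightarrow> 'val)
     \<Rightarrow> (nat \<times> 'e) list \<Rightarrow> ('v \<Rightarrow> nat) \<Rightarrow> bool" where
  "chk vbl hap T [] used = True"
| "chk vbl hap T (x # xs) used \<longleftrightarrow>
     hap (snd x) (\<lambda>p. T p (Suc (used p))) \<and>
     chk vbl hap T xs (\<lambda>p. if p \<in> vbl (snd x) then Suc (used p) else used p)"

definition passes_check where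
  "passes_check vbl hap T \<tau> \<longleftrightarrow>
     (\<forall>xs. mset xs = pwt_verts \<tau> \<and> sorted_wrt (\<lambda>a b. fst b \<le> fst a) xs
        \<longrightarrow> chk vbl hap T xs (\<lambda>_. 0))"

end

theory Submission imports Defs begin


abbreviation sh :: "(nat \<times> 'e) multiset \<Rightarrow> (nat \<times> 'e) multiset" where
  "sh M \<equiv> image_mset (\<lambda>(d, B). (Suc d, B)) M"

lemma image_sum_mset: "image_mset f (sum_mset M) = sum_mset (image_mset (image_mset f) M)"
  by (induction M) auto

lemma verts_WT: "verts (WT A ch) = add_mset (0, A) (sh (sum_mset (image_mset verts ch)))"
  by (simp add: image_sum_mset multiset.map_comp o_def)

lemma att_verts: "att Pr B k c c' \<Longrightarrow> verts c' = add_mset (Suc k, B) (verts c)"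
proof (induction rule: att.induct)
  case (here A ch)
  then show ?case by (simp add: verts_WT)
next
  case (down c ch k c' A)
  then obtain ch0 where ch: "ch = add_mset c ch0" by (metis multi_member_split)
  show ?case using down by (simp add: verts_WT ch)
qed

lemma att_lab: "att Pr B k c c' \<Longrightarrow> wlab c' = wlab c"
  by (induction rule: att.induct) auto

lemma verts_top: "(0, wlab c) \<in># verts c"
  by (cases c) (simp add: verts_WT)

lemma verts_child: "(d, X) \<in># verts c \<Longrightarrow> c \<in># ch \<Longrightarrow> (Suc d, X) \<in># verts (WT A ch)"
proof -
  assume a: "(d, X) \<in># verts c" "c \<in># ch"
  then obtain ch0 where ch: "ch = add_mset c ch0" by (metis multi_member_split)
  show ?thesis using a by (force simp: verts_WT ch)
qed

lemma lab_image_eq: "c \<in># ch \<Longrightarrow> wlab c' = wlab c \<Longrightarrow>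
   image_mset wlab (add_mset c' (ch - {#c#})) = image_mset wlab ch"
proof -
  assume a: "c \<in># ch" "wlab c' = wlab c"
  then obtain ch0 where ch: "ch = add_mset c ch0" by (metis multi_member_split)
  show ?thesis using a by (simp add: ch)
qed

lemma att_proper: "att Pr B k c c' \<Longrightarrow> wt_proper c \<Longrightarrow> Pr B \<Longrightarrow>
  (\<forall>d X. (d, X) \<in># verts c \<longrightarrow> Pr X \<longrightarrow> d \<le> k) \<Longrightarrow> wt_proper c'"
proof (induction rule: att.induct)
  case (here A ch)
  have nb: "\<forall>c\<in>#ch. wlab c \<noteq> B"
  proof
    fix c assume c: "c \<in># ch"
    show "wlab c \<noteq> B"
    proof
      assume "wlab c = B"
      then have "(Suc 0, B) \<in># verts (WT A ch)" using verts_child[OF verts_top c] by simp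
      then show False using here by force
    qed
  qed
  then have "count (image_mset wlab ch) B = 0" by (auto simp: count_eq_zero_iff)
  then show ?case using here by (auto simp: distinct_labels_def)
next
  case (down c ch k c' A)
  have "wt_proper c" using down by auto
  moreover have "\<forall>d X. (d, X) \<in># verts c \<longrightarrow> Pr X \<longrightarrow> d \<le> k"
    using down.prems(3) verts_child[OF _ down.hyps(1)] by fastforce
  ultimately have "wt_proper c'" using down by blast
  moreover have "distinct_labels (add_mset c' (ch - {#c#}))"
    using down lab_image_eq[OF down.hyps(1) att_lab[OF down.hyps(2)]]
    by (simp add: distinct_labels_def)
  ultimately show ?case using down.prems(1) by (auto dest: in_diffD)
qed

lemma pwt_verts_mem: "(Suc d, X) \<in># pwt_verts \<tau> \<longleftrightarrow> (\<exists>c\<in>#snd \<tau>. (d, X) \<in># verts c)"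
  by (auto simp: pwt_verts_def in_Union_mset_iff)

lemma pwt_verts_add: "pwt_verts (S, add_mset c M) = sh (verts c) + pwt_verts (S, M)"
  by (simp add: pwt_verts_def)

lemma pwt_verts_att: "c \<in># M \<Longrightarrow> att Pr B k c c' \<Longrightarrow>
   pwt_verts (S, add_mset c' (M - {#c#})) = add_mset (Suc (Suc k), B) (pwt_verts (S, M))"
proof -
  assume a: "c \<in># M" "att Pr B k c c'"
  then obtain M0 where M: "M = add_mset c M0" by (metis multi_member_split)
  show ?thesis using a by (simp add: M pwt_verts_add att_verts)
qed



definition winv :: "'e set \<Rightarrow> ('e \<Rightarrow> 'v set) \<Rightarrow> 'e list \<Rightarrow> nat \<Rightarrow> nat \<Rightarrow> ('v, 'e) pwt \<Rightarrow> bool" where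
 "winv Ev vbl L n k \<tau> \<longleftrightarrow> proper \<tau> \<and> (\<exists>I dep. I \<subseteq> {k..<n} \<and>
    pwt_verts \<tau> = image_mset (\<lambda>i. (dep i, L!i)) (mset_set I) \<and>
    (\<forall>i\<in>I. 1 \<le> dep i) \<and>
    (\<forall>i\<in>I. \<forall>j\<in>I. i < j \<longrightarrow> vbl (L!i) \<inter> vbl (L!j) \<noteq> {} \<longrightarrow> dep j < dep i) \<and>
    (\<forall>j\<in>I. \<forall>i. k \<le> i \<longrightarrow> i < j \<longrightarrow> vbl (L!i) \<inter> vbl (L!j) \<noteq> {} \<longrightarrow> i \<in> I))"

lemma winv_step:
  assumes kn: "k < n" and BE: "L!k \<in> Ev"
    and bs: "build_step Ev vbl (L!k) \<tau> \<tau>1" and iv: "winv Ev vbl L n (Suc k) \<tau>"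
  shows "winv Ev vbl L n k \<tau>1"
proof -
  define B where "B = L!k"
  define Pr where "Pr = (\<lambda>X. B \<in> Gamma_plus Ev vbl X)"
  define Ds where "Ds = {d. \<exists>c\<in>#snd \<tau>. \<exists>X. (d, X) \<in># verts c \<and> Pr X}"
  from iv obtain I dep where pr: "proper \<tau>" and I: "I \<subseteq> {Suc k..<n}"
    and pv: "pwt_verts \<tau> = image_mset (\<lambda>i. (dep i, L!i)) (mset_set I)"
    and d1: "\<forall>i\<in>I. 1 \<le> dep i"
    and a: "\<forall>i\<in>I. \<forall>j\<in>I. i < j \<longrightarrow> vbl (L!i) \<inter> vbl (L!j) \<noteq> {} \<longrightarrow> dep j < dep i"
    and b: "\<forall>j\<in>I. \<forall>i. Suc k \<le> i \<longrightarrow> i < j \<longrightarrow> vbl (L!i) \<inter> vbl (L!j) \<noteq> {} \<longrightarrow> i \<in> I"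
    unfolding winv_def by blast
  have fI: "finite I" using I finite_subset by blast
  have PrB: "Pr B" by (simp add: Pr_def Gamma_plus_def)
  have Dseq: "Ds = (\<lambda>i. dep i - 1) ` {i\<in>I. Pr (L!i)}"
  proof -
    have "d \<in> Ds \<longleftrightarrow> (\<exists>X. (Suc d, X) \<in># pwt_verts \<tau> \<and> Pr X)" for d
      unfolding Ds_def pwt_verts_mem by blast
    also have "\<dots> d \<longleftrightarrow> d \<in> (\<lambda>i. dep i - 1) ` {i\<in>I. Pr (L!i)}" for d
    proof -
      have sd: "Suc (dep i - 1) = dep i" if "i \<in> I" for i using d1 that by auto
      show ?thesis using fI unfolding pv apply (auto simp: image_iff) using sd by (metis One_nat_def)
    qed
    finally show ?thesis by blast
  qed
  have fD: "finite Ds" using Dseq fI by simp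
  have share: "Pr (L!j)" if "vbl (L!j) \<inter> vbl B \<noteq> {}" for j
    using that BE by (auto simp: Pr_def Gamma_plus_def Gamma_def B_def)
  have shareD: "dep j - 1 \<in> Ds" if "j \<in> I" "vbl (L!j) \<inter> vbl B \<noteq> {}" for j
    using that share unfolding Dseq by blast
  have kI: "k \<notin> I" using I by auto
  have ltk: "\<forall>j\<in>I. k < j" using I by auto
  show ?thesis
  proof (cases "Ds \<noteq> {}")
    case True
    then obtain c c' where c: "c \<in># snd \<tau>" and att: "att Pr B (Max Ds) c c'"
      and t1: "snd \<tau>1 = add_mset c' (snd \<tau> - {#c#})" and f1: "fst \<tau>1 = fst \<tau>"
      using bs unfolding build_step_def Let_def Pr_def[symmetric] B_def[symmetric] Ds_def[symmetric]
      by auto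
    have tau1: "\<tau>1 = (fst \<tau>, add_mset c' (snd \<tau> - {#c#}))" using t1 f1 by (metis prod.collapse)
    have "wt_proper c" using pr c unfolding proper_def by blast
    moreover have "\<forall>d X. (d, X) \<in># verts c \<longrightarrow> Pr X \<longrightarrow> d \<le> Max Ds"
      using c fD unfolding Ds_def by (auto intro!: Max_ge)
    ultimately have pc': "wt_proper c'" using att_proper[OF att _ PrB] by blast
    have prop1: "proper \<tau>1"
      using pr pc' lab_image_eq[OF c att_lab[OF att]] unfolding tau1 proper_def
      by (auto simp: distinct_labels_def dest: in_diffD)
    define dep' where "dep' = dep(k := Suc (Suc (Max Ds)))"
    have pv1: "pwt_verts \<tau>1 = image_mset (\<lambda>i. (dep' i, L!i)) (mset_set (insert k I))"
    proof -
      have "pwt_verts \<tau>1 = add_mset (Suc (Suc (Max Ds)), B) (pwt_verts \<tau>)"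
        unfolding tau1 using pwt_verts_att[OF c att, of "fst \<tau>"] by simp
      also have "\<dots> = image_mset (\<lambda>i. (dep' i, L!i)) (mset_set (insert k I))"
        using fI kI unfolding pv dep'_def B_def
        by (auto intro!: image_mset_cong)
      finally show ?thesis .
    qed
    show ?thesis unfolding winv_def
    proof (intro conjI exI[of _ "insert k I"] exI[of _ dep'])
      show "proper \<tau>1" by (rule prop1)
      show "insert k I \<subseteq> {k..<n}" using I kn by auto
      show "pwt_verts \<tau>1 = image_mset (\<lambda>i. (dep' i, L!i)) (mset_set (insert k I))" by (rule pv1)
      show "\<forall>i\<in>insert k I. 1 \<le> dep' i" using d1 kI by (auto simp: dep'_def)
      show "\<forall>i\<in>insert k I. \<forall>j\<in>insert k I. i < j \<longrightarrow> vbl (L!i) \<inter> vbl (L!j) \<noteq> {} \<longrightarrow> dep' j < dep' i"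
      proof (intro ballI impI)
        fix i j assume ij: "i \<in> insert k I" "j \<in> insert k I" "i < j" "vbl (L!i) \<inter> vbl (L!j) \<noteq> {}"
        show "dep' j < dep' i"
        proof (cases "i = k")
          case True
          then have jI: "j \<in> I" "j \<noteq> k" using ij by auto
          have "dep j - 1 \<in> Ds" using shareD[OF jI(1)] ij True B_def by (metis inf_commute)
          then have "dep j - 1 \<le> Max Ds" using fD by simp
          then show ?thesis using True jI d1 by (auto simp: dep'_def)
        next
          case False
          then have "i \<in> I" using ij by auto
          moreover have "j \<in> I" using ij False ltk by auto
          ultimately show ?thesis using a ij False kI by (auto simp: dep'_def)
        qed
      qed
      show "\<forall>j\<in>insert k I. \<forall>i. k \<le> i \<longrightarrow> i < j \<longrightarrow> vbl (L!i) \<inter> vbl (L!j) \<noteq> {} \<longrightarrow> i \<in> insert k I"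
        proof (intro ballI allI impI)
          fix j i assume h: "j \<in> insert k I" "k \<le> i" "i < j" "vbl (L!i) \<inter> vbl (L!j) \<noteq> {}"
          show "i \<in> insert k I"
          proof (cases "i = k")
            case False
            then have "Suc k \<le> i" using h by simp
            moreover have "j \<in> I" using h by auto
            ultimately show ?thesis using b h by blast
          qed simp
        qed
    qed
  next
    case False
    then have De: "Ds = {}" by simp
    have noshare: "vbl (L!j) \<inter> vbl B = {}" if "j \<in> I" for j
      using shareD[OF that] De by blast
    show ?thesis
    proof (cases "fst \<tau> \<inter> vbl B \<noteq> {}")
      case True
      then have tau1: "\<tau>1 = (fst \<tau>, add_mset (WT B {#}) (snd \<tau>))"
        using bs De unfolding build_step_def Let_def Pr_def[symmetric] B_def[symmetric] Ds_def[symmetric]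
        by auto
      have nb: "\<forall>c\<in>#snd \<tau>. wlab c \<noteq> B"
        using De PrB verts_top unfolding Ds_def by fastforce
      then have "count (image_mset wlab (snd \<tau>)) B = 0" by (auto simp: count_eq_zero_iff)
      then have prop1: "proper \<tau>1" using pr unfolding tau1 proper_def
        by (auto simp: distinct_labels_def)
      define dep' where "dep' = dep(k := 1)"
      have pv1: "pwt_verts \<tau>1 = image_mset (\<lambda>i. (dep' i, L!i)) (mset_set (insert k I))"
      proof -
        have "pwt_verts \<tau>1 = add_mset (Suc 0, B) (pwt_verts \<tau>)"
          unfolding tau1 pwt_verts_add by (simp add: verts_WT)
        also have "\<dots> = image_mset (\<lambda>i. (dep' i, L!i)) (mset_set (insert k I))"
          using fI kI unfolding pv dep'_def B_def
          by (auto intro!: image_mset_cong)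
        finally show ?thesis .
      qed
      show ?thesis unfolding winv_def
      proof (intro conjI exI[of _ "insert k I"] exI[of _ dep'])
        show "proper \<tau>1" by (rule prop1)
        show "insert k I \<subseteq> {k..<n}" using I kn by auto
        show "pwt_verts \<tau>1 = image_mset (\<lambda>i. (dep' i, L!i)) (mset_set (insert k I))" by (rule pv1)
        show "\<forall>i\<in>insert k I. 1 \<le> dep' i" using d1 kI by (auto simp: dep'_def)
        show "\<forall>i\<in>insert k I. \<forall>j\<in>insert k I. i < j \<longrightarrow> vbl (L!i) \<inter> vbl (L!j) \<noteq> {} \<longrightarrow> dep' j < dep' i"
        proof (intro ballI impI)
          fix i j assume ij: "i \<in> insert k I" "j \<in> insert k I" "i < j" "vbl (L!i) \<inter> vbl (L!j) \<noteq> {}"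
          show "dep' j < dep' i"
          proof (cases "i = k")
            case True
            then have "j \<in> I" using ij by auto
            then show ?thesis using noshare ij True unfolding B_def by (auto simp: inf_commute)
          next
            case False
            then have "i \<in> I" using ij by auto
            moreover have "j \<in> I" using ij False ltk by auto
            ultimately show ?thesis using a ij False kI by (auto simp: dep'_def)
          qed
        qed
        show "\<forall>j\<in>insert k I. \<forall>i. k \<le> i \<longrightarrow> i < j \<longrightarrow> vbl (L!i) \<inter> vbl (L!j) \<noteq> {} \<longrightarrow> i \<in> insert k I"
          proof (intro ballI allI impI)
          fix j i assume h: "j \<in> insert k I" "k \<le> i" "i < j" "vbl (L!i) \<inter> vbl (L!j) \<noteq> {}"
          show "i \<in> insert k I"
          proof (cases "i = k")
            case False
            then have "Suc k \<le> i" using h by simp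
            moreover have "j \<in> I" using h by auto
            ultimately show ?thesis using b h by blast
          qed simp
        qed
      qed
    next
      case False
      then have tau1: "\<tau>1 = \<tau>"
        using bs De unfolding build_step_def Let_def Pr_def[symmetric] B_def[symmetric] Ds_def[symmetric]
        by auto
      show ?thesis unfolding winv_def tau1
      proof (intro conjI exI[of _ I] exI[of _ dep])
        show "proper \<tau>" by (rule pr)
        show "I \<subseteq> {k..<n}" using I by auto
        show "\<forall>j\<in>I. \<forall>i. k \<le> i \<longrightarrow> i < j \<longrightarrow> vbl (L!i) \<inter> vbl (L!j) \<noteq> {} \<longrightarrow> i \<in> I"
          using b noshare unfolding B_def by (metis Suc_leI inf_commute le_neq_implies_less)
      qed (use pv d1 a in auto)
    qed
  qed
qed



lemma run_Suc_cases: "run Ev vbl hap rule T (Suc k) = run Ev vbl hap rule T k \<or>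
   run Ev vbl hap rule T (Suc k) = run Ev vbl hap rule T k @
     [rule (run Ev vbl hap rule T k) (cur_eval vbl T (run Ev vbl hap rule T k))]"
  by (simp add: Let_def)

lemma run_len_le: "length (run Ev vbl hap rule T k) \<le> k"
  by (induction k) (auto simp: Let_def)

lemma run_prefix: "k \<le> m \<Longrightarrow> \<exists>zs. run Ev vbl hap rule T m = run Ev vbl hap rule T k @ zs"
proof (induction m)
  case 0 then show ?case by simp
next
  case (Suc m)
  show ?case
  proof (cases "k = Suc m")
    case False
    then obtain zs where "run Ev vbl hap rule T m = run Ev vbl hap rule T k @ zs" using Suc by force
    then show ?thesis using run_Suc_cases[of Ev vbl hap rule T m] by (metis append.assoc)
  qed simp
qed

lemma run_len_bound: "k \<le> m \<Longrightarrow> length (run Ev vbl hap rule T m) \<le> length (run Ev vbl hap rule T k) + (m - k)"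
proof (induction m)
  case 0 then show ?case by simp
next
  case (Suc m)
  show ?case
  proof (cases "k = Suc m")
    case False
    then show ?thesis using Suc run_Suc_cases[of Ev vbl hap rule T m] by (smt (verit) Suc_diff_le Suc_leD add_Suc_right le_Suc_eq length_append_singleton not_less_eq_eq)
  qed simp
qed

lemma run_full:
  assumes len: "length (run Ev vbl hap rule T t) = t" and j: "j < t"
  shows "take j (run Ev vbl hap rule T t) = run Ev vbl hap rule T j \<and>
    (\<exists>A\<in>Ev. hap A (cur_eval vbl T (run Ev vbl hap rule T j))) \<and>
    run Ev vbl hap rule T t ! j = rule (run Ev vbl hap rule T j) (cur_eval vbl T (run Ev vbl hap rule T j))"
proof -
  let ?r = "run Ev vbl hap rule T"
  have lk: "length (?r k) = k" if "k \<le> t" for k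
    using run_len_bound[OF that, of Ev vbl hap rule T] run_len_le[of Ev vbl hap rule T k] len that by linarith
  have lj: "length (?r j) = j" using lk j by auto
  have lsj: "length (?r (Suc j)) = Suc j" using lk[of "Suc j"] j by (simp del: run.simps)
  obtain zs where zs: "?r t = ?r j @ zs" using run_prefix[of j t Ev vbl hap rule T] j by auto
  obtain ws where ws: "?r t = ?r (Suc j) @ ws" using run_prefix[of "Suc j" t Ev vbl hap rule T] j by auto
  have ex: "\<exists>A\<in>Ev. hap A (cur_eval vbl T (?r j))"
  proof (rule ccontr)
    assume "\<not> ?thesis"
    then have "?r (Suc j) = ?r j" by (simp add: Let_def)
    then show False using lj lsj by simp
  qed
  then have rs: "?r (Suc j) = ?r j @ [rule (?r j) (cur_eval vbl T (?r j))]" by (simp add: Let_def)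
  have "?r t = ?r j @ [rule (?r j) (cur_eval vbl T (?r j))] @ ws" using ws rs by (simp del: run.simps)
  then show ?thesis using lj ex by (simp del: run.simps add: nth_append)
qed

lemma chk_map:
  "(\<forall>m<length js. hap (lab (js!m)) (\<lambda>p. T p (Suc (used p + length (filter (\<lambda>i. p \<in> vbl (lab i)) (take m js))))))
   \<Longrightarrow> chk vbl hap T (map (\<lambda>i. (dep i, lab i)) js) used"
proof (induction js arbitrary: used)
  case Nil then show ?case by simp
next
  case (Cons j js)
  let ?u = "\<lambda>p. if p \<in> vbl (lab j) then Suc (used p) else used p"
  have h0: "hap (lab j) (\<lambda>p. T p (Suc (used p)))" using Cons.prems[rule_format, of 0] by simp
  have "chk vbl hap T (map (\<lambda>i. (dep i, lab i)) js) ?u"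
  proof (rule Cons.IH, intro allI impI)
    fix m assume m: "m < length js"
    have "hap (lab ((j#js)!Suc m)) (\<lambda>p. T p (Suc (used p + length (filter (\<lambda>i. p \<in> vbl (lab i)) (take (Suc m) (j#js))))))"
      using Cons.prems m by auto
    moreover have "(\<lambda>p. T p (Suc (used p + length (filter (\<lambda>i. p \<in> vbl (lab i)) (take (Suc m) (j#js)))))) =
       (\<lambda>p. T p (Suc (?u p + length (filter (\<lambda>i. p \<in> vbl (lab i)) (take m js)))))"
      by auto
    ultimately show "hap (lab (js!m)) (\<lambda>p. T p (Suc (?u p + length (filter (\<lambda>i. p \<in> vbl (lab i)) (take m js)))))"
      by simp
  qed
  then show ?case using h0 by simp
qed

lemma mset_image_list: "mset xs = image_mset f M \<Longrightarrow> \<exists>ys. mset ys = M \<and> map f ys = xs"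
proof (induction xs arbitrary: M)
  case Nil then show ?case by simp
next
  case (Cons x xs)
  then have "x \<in># image_mset f M" by (metis list.set_intros(1) set_mset_mset)
  then obtain y where y: "y \<in># M" "f y = x" by auto
  then obtain M0 where M: "M = add_mset y M0" by (metis multi_member_split)
  then have "mset xs = image_mset f M0" using Cons.prems y by simp
  then obtain ys where "mset ys = M0" "map f ys = xs" using Cons.IH by blast
  then show ?case using M y by (intro exI[of _ "y#ys"]) auto
qed



lemma winv_steps:
  assumes nL: "n = length L" and LE: "\<forall>j<n. L!j \<in> Ev"
  shows "k \<le> n \<Longrightarrow> build_steps Ev vbl \<tau>0 (rev (take k L)) \<tau>' \<Longrightarrow> winv Ev vbl L n k \<tau>0 \<Longrightarrow> winv Ev vbl L n 0 \<tau>'"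
proof (induction k arbitrary: \<tau>0)
  case 0
  then have "\<tau>' = \<tau>0" by (auto elim: build_steps.cases)
  then show ?case using 0 by simp
next
  case (Suc k)
  have "rev (take (Suc k) L) = L!k # rev (take k L)"
    using Suc.prems(1) nL by (simp add: take_Suc_conv_app_nth)
  then obtain \<tau>1 where s1: "build_step Ev vbl (L!k) \<tau>0 \<tau>1" and s2: "build_steps Ev vbl \<tau>1 (rev (take k L)) \<tau>'"
    using Suc.prems(2) by (auto elim: build_steps.cases)
  have "winv Ev vbl L n k \<tau>1"
    using winv_step[of k n L Ev vbl \<tau>0 \<tau>1] Suc.prems LE s1 by auto
  then show ?case using Suc.IH[OF _ s2] Suc.prems by auto
qed



theorem lemma3p1:
  fixes P :: "'v set" and Ev :: "'e set" and D :: "'v \<Rightarrow> 'val set"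
    and vbl :: "'e \<Rightarrow> 'v set" and hap :: "'e \<Rightarrow> ('v \<Rightarrow> 'val) \<Rightarrow> bool"
    and BT :: "'e \<Rightarrow> 'v btree" and T :: "'v \<Rightarrow> nat \<Rightarrow> 'val"
    and rule :: "'e list \<Rightarrow> ('v \<Rightarrow> 'val) \<Rightarrow> 'e"
    and \<tau> :: "('v, 'e) pwt"
  assumes "setting P Ev D vbl hap"
    and "valid_btrees Ev vbl BT"
    and "valid_table P D T"
    and "valid_rule Ev hap rule"
    and "is_pwt Ev vbl BT \<tau>"
    and "occurs Ev vbl hap rule T BT \<tau>"
  shows "proper \<tau> \<and> passes_check vbl hap T \<tau>"
proof -
  note set = assms(1) and tab = assms(3) and vr = assms(4)
  obtain t where st: "is_step Ev vbl hap rule T t"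
    and bs: "build_steps Ev vbl (fst \<tau>, {#}) (rev (butlast (run Ev vbl hap rule T t))) \<tau>"
    using assms(6) unfolding occurs_def by blast
  define R where "R = run Ev vbl hap rule T t"
  define L where "L = butlast R"
  define n where "n = length L"
  have lenR: "length R = t" using st unfolding is_step_def R_def by simp
  have nt: "n = t - 1" using lenR unfolding n_def L_def by simp
  have Lfacts: "L!j \<in> Ev \<and> hap (L!j) (cur_eval vbl T (take j L))" if j: "j < n" for j
  proof -
    have jt: "j < t" using j nt by simp
    have rf: "take j R = run Ev vbl hap rule T j \<and>
      (\<exists>A\<in>Ev. hap A (cur_eval vbl T (run Ev vbl hap rule T j))) \<and>
      R ! j = rule (run Ev vbl hap rule T j) (cur_eval vbl T (run Ev vbl hap rule T j))"
      using run_full[OF lenR[unfolded R_def] jt] unfolding R_def by blast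
    have "take j L = take j R" using j unfolding L_def n_def by (simp add: take_butlast)
    moreover have "L!j = R!j" using j unfolding L_def n_def by (simp add: nth_butlast)
    moreover have "rule (run Ev vbl hap rule T j) (cur_eval vbl T (run Ev vbl hap rule T j)) \<in> Ev \<and>
      hap (rule (run Ev vbl hap rule T j) (cur_eval vbl T (run Ev vbl hap rule T j))) (cur_eval vbl T (run Ev vbl hap rule T j))"
      using vr rf unfolding valid_rule_def by blast
    ultimately show ?thesis using rf by (simp del: run.simps)
  qed
  have LE: "\<forall>j<n. L!j \<in> Ev" using Lfacts by blast
  have init: "winv Ev vbl L n n (fst \<tau>, {#})"
    unfolding winv_def proper_def distinct_labels_def
    by (intro conjI exI[of _ "{}"] exI[of _ "\<lambda>_. 0::nat"]) (simp_all add: pwt_verts_def)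
  have "winv Ev vbl L n 0 \<tau>"
  proof -
    have bs': "build_steps Ev vbl (fst \<tau>, {#}) (rev (take n L)) \<tau>"
      using bs unfolding n_def L_def R_def by simp
    show ?thesis by (rule winv_steps[OF n_def LE order_refl bs' init])
  qed
  then obtain I dep where pr: "proper \<tau>" and I: "I \<subseteq> {0..<n}"
    and pv: "pwt_verts \<tau> = image_mset (\<lambda>i. (dep i, L!i)) (mset_set I)"
    and a: "\<forall>i\<in>I. \<forall>j\<in>I. i < j \<longrightarrow> vbl (L!i) \<inter> vbl (L!j) \<noteq> {} \<longrightarrow> dep j < dep i"
    and b: "\<forall>j\<in>I. \<forall>i. 0 \<le> i \<longrightarrow> i < j \<longrightarrow> vbl (L!i) \<inter> vbl (L!j) \<noteq> {} \<longrightarrow> i \<in> I"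
    unfolding winv_def by (elim conjE exE) (rule that, assumption+)
  have fI: "finite I" using I finite_subset by blast
  have pc: "passes_check vbl hap T \<tau>"
    unfolding passes_check_def
  proof (intro allI impI, elim conjE)
    fix xs assume mx: "mset xs = pwt_verts \<tau>" and so: "sorted_wrt (\<lambda>a b. fst b \<le> fst a) xs"
    obtain js where mj: "mset js = mset_set I" and xs: "map (\<lambda>i. (dep i, L!i)) js = xs"
      using mset_image_list[OF mx[unfolded pv]] by blast
    have sj: "set js = I" using mj fI by (metis finite_set_mset_mset_set set_mset_mset)
    have dj: "distinct js" unfolding distinct_count_atmost_1 using mj fI sj by (simp add: count_mset_set)
    have srt: "dep (js!m2) \<le> dep (js!m1)" if "m1 < m2" "m2 < length js" for m1 m2
      using so that unfolding xs[symmetric] sorted_wrt_iff_nth_less by auto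
    show "chk vbl hap T xs (\<lambda>_. 0)"
      unfolding xs[symmetric]
    proof (rule chk_map, intro allI impI)
      fix m assume m: "m < length js"
      define j where "j = js!m"
      have jI: "j \<in> I" using m sj j_def by auto
      have jn: "j < n" using jI I by auto
      have hj: "hap (L!j) (cur_eval vbl T (take j L))" and jE: "L!j \<in> Ev" using Lfacts[OF jn] by auto
      have det: "determines P D hap (L!j) (vbl (L!j))" and vP: "vbl (L!j) \<subseteq> P"
        using set jE unfolding setting_def by auto
      let ?g = "\<lambda>p. T p (Suc (0 + length (filter (\<lambda>i. p \<in> vbl (L!i)) (take m js))))"
      have agree: "cur_eval vbl T (take j L) p = ?g p" if p: "p \<in> vbl (L!j)" for p
      proof -
        have r: "length (filter (\<lambda>B. p \<in> vbl B) (take j L)) = card {i. i < j \<and> p \<in> vbl (L!i)}"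
        proof -
          have "{i. i < j \<and> p \<in> vbl (take j L ! i)} = {i. i < j \<and> p \<in> vbl (L ! i)}" by auto
          then show ?thesis using jn unfolding n_def by (simp add: length_filter_conv_card)
        qed
        have dt: "distinct (take m js)" using dj by simp
        have l: "length (filter (\<lambda>i. p \<in> vbl (L!i)) (take m js)) = card {i \<in> set (take m js). p \<in> vbl (L!i)}"
          using distinct_card[of "filter (\<lambda>i. p \<in> vbl (L!i)) (take m js)"] dt by simp
        have seq: "{i \<in> set (take m js). p \<in> vbl (L!i)} = {i. i < j \<and> p \<in> vbl (L!i)}"
        proof (intro equalityI subsetI)
          fix i assume "i \<in> {i \<in> set (take m js). p \<in> vbl (L!i)}"
          then obtain m1 where m1: "m1 < m" "i = js!m1" and pi: "p \<in> vbl (L!i)"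
            using m by (auto simp: in_set_conv_nth)
          have iI: "i \<in> I" using m1 m sj by auto
          have ne: "i \<noteq> j" using m1 m dj unfolding j_def by (simp add: nth_eq_iff_index_eq)
          have "dep j \<le> dep i" using srt[OF m1(1) m] m1 j_def by simp
          moreover have "j < i \<Longrightarrow> dep i < dep j" using a iI jI pi p by blast
          ultimately have "i < j" using ne by linarith
          then show "i \<in> {i. i < j \<and> p \<in> vbl (L!i)}" using pi by simp
        next
          fix i assume "i \<in> {i. i < j \<and> p \<in> vbl (L!i)}"
          then have ij: "i < j" and pi: "p \<in> vbl (L!i)" by auto
          have iI: "i \<in> I" using b jI ij pi p by blast
          have dl: "dep j < dep i" using a iI jI ij pi p by blast
          obtain m1 where m1: "m1 < length js" "i = js!m1" using iI sj by (metis in_set_conv_nth)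
          have "m1 < m"
          proof (rule ccontr)
            assume "\<not> m1 < m"
            then have "m1 = m \<or> m < m1" by auto
            then show False
            proof
              assume "m1 = m" then show False using m1 ij j_def by simp
            next
              assume "m < m1" then show False using srt[OF _ m1(1)] m1 dl j_def by fastforce
            qed
          qed
          then show "i \<in> {i \<in> set (take m js). p \<in> vbl (L!i)}"
            using m1 pi by (auto simp: in_set_conv_nth intro!: exI[of _ m1])
        qed
        show ?thesis unfolding cur_eval_def using r l seq by simp
      qed
      have inD1: "\<forall>p\<in>P. cur_eval vbl T (take j L) p \<in> D p"
        using tab unfolding valid_table_def cur_eval_def by auto
      have inD2: "\<forall>p\<in>P. ?g p \<in> D p"
        using tab unfolding valid_table_def by auto
      have ag: "\<forall>p\<in>vbl (L!j). cur_eval vbl T (take j L) p = ?g p" using agree by blast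
      have "hap (L!j) (cur_eval vbl T (take j L)) = hap (L!j) ?g"
        using det[unfolded determines_def, rule_format, OF inD1[rule_format] inD2[rule_format] ag[rule_format]] .
      then have "hap (L!j) ?g" using hj by simp
      then show "hap (L!(js!m)) (\<lambda>p. T p (Suc ((\<lambda>_. 0) p + length (filter (\<lambda>i. p \<in> vbl (L!i)) (take m js)))))"
        unfolding j_def by simp
    qed
  qed
  show ?thesis using pr pc by blast
qed


end
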